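(* Let $\theta^{(1)},\ldots,\theta^{(M)}\in\mathbb{R}^D$ be an ensemble with empirical mean $\hat m=\frac1M\sum_i\theta^{(i)}$ and invertible empirical covariance $\hat\Sigma=\frac{1}{M-1}\sum_i(\theta^{(i)}-\hat m)(\theta^{(i)}-\hat m)^{\rm T}$, and let $\epsilon>0$. Define $$g_\epsilon(\theta,\theta')=\exp\Big(-\tfrac{1}{4\epsilon}(\theta-\theta')^{\rm T}\hat\Sigma^{-1}(\theta-\theta')\Big),\qquad k_\epsilon(\theta,\theta')=\frac{g_\epsilon(\theta,\theta')}{\sqrt{\sum_{i}g_\epsilon(\theta,\theta^{(i)})}\sqrt{\sum_i g_\epsilon(\theta',\theta^{(i)})}},$$ $n_\epsilon(\theta)=\sum_{i=1}^M k_\epsilon(\theta,\theta^{(i)})$, and the $M\times M$ Markov matrix ${\rm T}_{ij}=k_\epsilon(\theta^{(i)},\theta^{(j)})/n_\epsilon(\theta^{(i)})$. Let $\Psi_{\rm data}:\mathbb{R}^D\to\mathbb{R}$, let $\Delta\Psi^{(j)}_{\rm data}=\Psi_{\rm data}(\theta^{(j)})-\frac1M\sum_{k=1}^M\Psi_{\rm data}(\theta^{(k)})$, let $\tilde{\rm V}\in\mathbb{R}^M$ solve $\tilde{\rm V}={\rm T}\tilde{\rm V}+\epsilon\,\Delta\Psi_{\rm data}$, set $r_j=\tilde{\rm V}^{(j)}+\epsilon\,\Delta\Psi^{(j)}_{\rm data}$, and define $$\tilde V(\theta)=\frac{1}{n_\epsilon(\theta)}\sum_{j=1}^M k_\epsilon(\theta,\theta^{(j)})\,r_j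 .$$ Then for each $i=1,\ldots,M$, $$\hat\Sigma\,\nabla_\theta\tilde V(\theta^{(i)})=\sum_{j=1}^M s_{ij}\,\theta^{(j)},\qquad s_{ij}=\frac{1}{2\epsilon}{\rm T}_{ij}\Big(r_j-\sum_{k=1}^M{\rm T}_{ik}r_k\Big).$$ *)

theory Defs
  imports "HOL-Analysis.Analysis"
begin

definition outer_prod :: "real^'d \<Rightarrow> real^'d \<Rightarrow> real^'d^'d" where
  "outer_prod u v = (\<chi> a b. u $ a * v $ b)"

definition emp_mean :: "nat \<Rightarrow> (nat \<Rightarrow> real^'d) \<Rightarrow> real^'d" where
  "emp_mean M \<theta> = (1 / real M) *\<^sub>R (\<Sum>i=1..M. \<theta> i)"

definition emp_cov :: "nat \<Rightarrow> (nat \<Rightarrow> real^'d) \<Rightarrow> real^'d^'d" where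
  "emp_cov M \<theta> = (1 / (real M - 1)) *\<^sub>R
     (\<Sum>i=1..M. outer_prod (\<theta> i - emp_mean M \<theta>) (\<theta> i - emp_mean M \<theta>))"

definition g_eps :: "nat \<Rightarrow> (nat \<Rightarrow> real^'d) \<Rightarrow> real \<Rightarrow> real^'d \<Rightarrow> real^'d \<Rightarrow> real" where
  "g_eps M \<theta> \<epsilon> x y =
     exp (- (1 / (4 * \<epsilon>)) * ((x - y) \<bullet> (matrix_inv (emp_cov M \<theta>) *v (x - y))))"

definition k_eps :: "nat \<Rightarrow> (nat \<Rightarrow> real^'d) \<Rightarrow> real \<Rightarrow> real^'d \<Rightarrow> real^'d \<Rightarrow> real" where
  "k_eps M \<theta> \<epsilon> x y = g_eps M \<theta> \<epsilon> x y /
     (sqrt (\<Sum>i=1..M. g_eps M \<theta> \<epsilon> x (\<theta> i)) * sqrt (\<Sum>i=1..M. g_eps M \<theta> \<epsilon> y (\<theta> i)))"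

definition n_eps :: "nat \<Rightarrow> (nat \<Rightarrow> real^'d) \<Rightarrow> real \<Rightarrow> real^'d \<Rightarrow> real" where
  "n_eps M \<theta> \<epsilon> x = (\<Sum>i=1..M. k_eps M \<theta> \<epsilon> x (\<theta> i))"

definition markov_T :: "nat \<Rightarrow> (nat \<Rightarrow> real^'d) \<Rightarrow> real \<Rightarrow> nat \<Rightarrow> nat \<Rightarrow> real" where
  "markov_T M \<theta> \<epsilon> i j = k_eps M \<theta> \<epsilon> (\<theta> i) (\<theta> j) / n_eps M \<theta> \<epsilon> (\<theta> i)"

definition delta_Psi :: "nat \<Rightarrow> (nat \<Rightarrow> real^'d) \<Rightarrow> (real^'d \<Rightarrow> real) \<Rightarrow> nat \<Rightarrow> real" where
  "delta_Psi M \<theta> \<Psi> j = \<Psi> (\<theta> j) - (1 / real M) * (\<Sum>k=1..M. \<Psi> (\<theta> k))"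

definition r_vec :: "nat \<Rightarrow> (nat \<Rightarrow> real^'d) \<Rightarrow> real \<Rightarrow> (real^'d \<Rightarrow> real) \<Rightarrow> (nat \<Rightarrow> real) \<Rightarrow> nat \<Rightarrow> real" where
  "r_vec M \<theta> \<epsilon> \<Psi> Vt j = Vt j + \<epsilon> * delta_Psi M \<theta> \<Psi> j"

definition V_interp :: "nat \<Rightarrow> (nat \<Rightarrow> real^'d) \<Rightarrow> real \<Rightarrow> (nat \<Rightarrow> real) \<Rightarrow> real^'d \<Rightarrow> real" where
  "V_interp M \<theta> \<epsilon> r x = (1 / n_eps M \<theta> \<epsilon> x) * (\<Sum>j=1..M. k_eps M \<theta> \<epsilon> x (\<theta> j) * r j)"

definition s_coef :: "nat \<Rightarrow> (nat \<Rightarrow> real^'d) \<Rightarrow> real \<Rightarrow> (nat \<Rightarrow> real) \<Rightarrow> nat \<Rightarrow> nat \<Rightarrow> real" where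
  "s_coef M \<theta> \<epsilon> r i j = (1 / (2 * \<epsilon>)) * markov_T M \<theta> \<epsilon> i j *
     (r j - (\<Sum>k=1..M. markov_T M \<theta> \<epsilon> i k * r k))"

end

theory Submission imports Defs begin

lemma inv_props:
  fixes S :: "real^'d^'d"
  assumes "invertible S"
  shows "S ** matrix_inv S = mat 1" "matrix_inv S ** S = mat 1"
  using someI_ex[OF assms[unfolded invertible_def]] unfolding matrix_inv_def by auto

lemma inv_sym:
  fixes S :: "real^'d^'d"
  assumes "invertible S" "transpose S = S"
  shows "transpose (matrix_inv S) = matrix_inv S"
proof -
  let ?A = "matrix_inv S"
  have 1: "transpose ?A ** S = mat 1"
    using inv_props(1)[OF assms(1)] assms(2)
    by (metis matrix_transpose_mul transpose_mat)
  have "transpose ?A = transpose ?A ** (S ** ?A)"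
    using inv_props(1)[OF assms(1)] by simp
  also have "\<dots> = (transpose ?A ** S) ** ?A" by (simp add: matrix_mul_assoc)
  also have "\<dots> = ?A" using 1 by simp
  finally show ?thesis .
qed

lemma cov_sym: "transpose (emp_cov M \<theta>) = emp_cov M \<theta>"
  unfolding emp_cov_def outer_prod_def
  by (simp add: transpose_def vec_eq_iff mult.commute)

lemma quad_deriv:
  fixes A :: "real^'d^'d"
  assumes "transpose A = A"
  shows "GDERIV (\<lambda>x. (x - y) \<bullet> (A *v (x - y))) x :> (2 *\<^sub>R (A *v (x - y)))"
proof -
  have "((\<lambda>x. (x - y) \<bullet> (A *v (x - y))) has_derivative (\<lambda>h. (x - y) \<bullet> (A *v h) + h \<bullet> (A *v (x - y)))) (at x)"
    by (auto intro!: derivative_eq_intros bounded_linear.has_derivative[OF matrix_vector_mul_bounded_linear])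
  moreover have "(\<lambda>h. (x - y) \<bullet> (A *v h) + h \<bullet> (A *v (x - y))) = (\<lambda>h. h \<bullet> (2 *\<^sub>R (A *v (x - y))))"
  proof
    fix h
    have "(x - y) \<bullet> (A *v h) = ((x - y) v* A) \<bullet> h" by (simp add: dot_lmul_matrix)
    also have "\<dots> = (A *v (x - y)) \<bullet> h"
      by (metis assms vector_transpose_matrix)
    finally show "(x - y) \<bullet> (A *v h) + h \<bullet> (A *v (x - y)) = h \<bullet> (2 *\<^sub>R (A *v (x - y)))"
      by (simp add: inner_commute algebra_simps)
  qed
  ultimately show ?thesis unfolding gderiv_def by simp
qed

lemma GDERIV_cmult: "GDERIV f x :> df \<Longrightarrow> GDERIV (\<lambda>x. c * f x) x :> c *\<^sub>R df"
  using GDERIV_mult[OF GDERIV_const, of f x df c] by simp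

lemma GDERIV_sum:
  assumes "finite J" "\<And>j. j \<in> J \<Longrightarrow> GDERIV (f j) x :> df j"
  shows "GDERIV (\<lambda>x. \<Sum>j\<in>J. f j x) x :> (\<Sum>j\<in>J. df j)"
  using assms
proof (induction J rule: finite_induct)
  case empty
  then show ?case using GDERIV_const by simp
next
  case (insert a F)
  then show ?case by (simp add: GDERIV_add)
qed

lemma g_deriv:
  assumes "transpose (matrix_inv (emp_cov M \<theta>)) = matrix_inv (emp_cov M \<theta>)"
  shows "GDERIV (\<lambda>x. g_eps M \<theta> \<epsilon> x y) x :>
     (- g_eps M \<theta> \<epsilon> x y / (2 * \<epsilon>)) *\<^sub>R (matrix_inv (emp_cov M \<theta>) *v (x - y))"
proof -
  let ?A = "matrix_inv (emp_cov M \<theta>)"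
  have "GDERIV (\<lambda>x. (- (1 / (4 * \<epsilon>))) * ((x - y) \<bullet> (?A *v (x - y)))) x :>
      (- (1 / (4 * \<epsilon>))) *\<^sub>R (2 *\<^sub>R (?A *v (x - y)))"
    by (rule GDERIV_cmult[OF quad_deriv[OF assms]])
  from GDERIV_DERIV_compose[OF this DERIV_exp]
  show ?thesis unfolding g_eps_def
    by (rule GDERIV_subst) (simp add: field_simps)
qed

lemma gen2: fixes D E :: "real^'d"
  shows "n *\<^sub>R (- (inverse w)\<^sup>2 *\<^sub>R (k *\<^sub>R D)) + inverse w *\<^sub>R (k *\<^sub>R E) = k *\<^sub>R ((1 / w) *\<^sub>R E - (n / w^2) *\<^sub>R D)"
  by (simp add: scaleR_diff_right scaleR_scaleR divide_inverse power_inverse algebra_simps)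

theorem mainTheorem2:
  fixes M :: nat and \<theta> :: "nat \<Rightarrow> real^'d" and \<epsilon> :: real
    and \<Psi> :: "real^'d \<Rightarrow> real" and Vt :: "nat \<Rightarrow> real"
  assumes "invertible (emp_cov M \<theta>)"
    and "\<epsilon> > 0"
    and "\<forall>i\<in>{1..M}. Vt i = (\<Sum>j=1..M. markov_T M \<theta> \<epsilon> i j * Vt j) + \<epsilon> * delta_Psi M \<theta> \<Psi> i"
  shows "\<forall>i\<in>{1..M}. \<exists>G.
           (GDERIV (V_interp M \<theta> \<epsilon> (r_vec M \<theta> \<epsilon> \<Psi> Vt)) (\<theta> i) :> G) \<and>
           emp_cov M \<theta> *v G = (\<Sum>j=1..M. s_coef M \<theta> \<epsilon> (r_vec M \<theta> \<epsilon> \<Psi> Vt) i j *\<^sub>R \<theta> j)"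
proof
  fix i assume i: "i \<in> {1..M}"
  define r where "r = r_vec M \<theta> \<epsilon> \<Psi> Vt"
  define S where "S = emp_cov M \<theta>"
  define A where "A = matrix_inv S"
  define g where "g = g_eps M \<theta> \<epsilon>"
  define d where "d = (\<lambda>x. \<Sum>k=1..M. g x (\<theta> k))"
  define c where "c = (\<lambda>j. 1 / sqrt (d (\<theta> j)))"
  define W where "W = (\<lambda>x. \<Sum>j=1..M. c j * g x (\<theta> j))"
  define N where "N = (\<lambda>x. \<Sum>j=1..M. c j * g x (\<theta> j) * r j)"
  have Asym: "transpose A = A" unfolding A_def S_def using inv_sym[OF assms(1) cov_sym] .
  have SA: "S ** A = mat 1" unfolding A_def S_def using inv_props(1)[OF assms(1)] .
  have gpos: "g x y > 0" for x y unfolding g_def g_eps_def by simp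
  have ne: "{1..M} \<noteq> {}" using i by auto
  have dpos: "d x > 0" for x unfolding d_def
    by (rule sum_pos) (use ne gpos in auto)
  have cpos: "c j > 0" for j unfolding c_def using dpos by simp
  have Wpos: "W x > 0" for x unfolding W_def
    by (rule sum_pos) (use ne gpos cpos in auto)
  have kform: "k_eps M \<theta> \<epsilon> x (\<theta> j) = (1 / sqrt (d x)) * (c j * g x (\<theta> j))" for x j
    unfolding k_eps_def c_def d_def g_def by simp
  have nform: "n_eps M \<theta> \<epsilon> x = (1 / sqrt (d x)) * W x" for x
    unfolding n_eps_def W_def kform by (simp add: sum_distrib_left)
  have Vform: "V_interp M \<theta> \<epsilon> r = (\<lambda>x. N x * inverse (W x))"
  proof
    fix x
    have "(\<Sum>j=1..M. k_eps M \<theta> \<epsilon> x (\<theta> j) * r j) = (1 / sqrt (d x)) * N x"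
      unfolding N_def kform by (simp add: sum_distrib_left mult.assoc)
    then show "V_interp M \<theta> \<epsilon> r x = N x * inverse (W x)"
      unfolding V_interp_def nform using dpos[of x] by (simp add: field_simps)
  qed
  have Tform: "markov_T M \<theta> \<epsilon> i j = c j * g (\<theta> i) (\<theta> j) / W (\<theta> i)" for j
    unfolding markov_T_def nform kform using dpos[of "\<theta> i"] by (simp add: field_simps)
  define dg where "dg = (\<lambda>j. (- g (\<theta> i) (\<theta> j) / (2 * \<epsilon>)) *\<^sub>R (A *v (\<theta> i - \<theta> j)))"
  have gd: "GDERIV (\<lambda>x. g x (\<theta> j)) (\<theta> i) :> dg j" for j
    unfolding dg_def g_def A_def S_def by (rule g_deriv[OF Asym[unfolded A_def S_def]])
  have dW: "GDERIV W (\<theta> i) :> (\<Sum>j=1..M. c j *\<^sub>R dg j)"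
    unfolding W_def by (rule GDERIV_sum) (auto intro: GDERIV_cmult gd)
  have dN: "GDERIV N (\<theta> i) :> (\<Sum>j=1..M. (c j * r j) *\<^sub>R dg j)"
    unfolding N_def
  proof (rule GDERIV_sum)
    fix j
    show "GDERIV (\<lambda>x. c j * g x (\<theta> j) * r j) (\<theta> i) :> (c j * r j) *\<^sub>R dg j"
      using GDERIV_cmult[OF gd[of j], of "c j * r j"] by (simp add: mult.commute mult.left_commute)
  qed simp
  define G where "G = N (\<theta> i) *\<^sub>R (- (inverse (W (\<theta> i)))\<^sup>2 *\<^sub>R (\<Sum>j=1..M. c j *\<^sub>R dg j))
      + inverse (W (\<theta> i)) *\<^sub>R (\<Sum>j=1..M. (c j * r j) *\<^sub>R dg j)"
  have GD: "GDERIV (V_interp M \<theta> \<epsilon> r) (\<theta> i) :> G"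
    unfolding Vform G_def
    by (rule GDERIV_mult[OF dN GDERIV_inverse[OF dW]]) (use Wpos in \<open>simp add: less_imp_neq[symmetric]\<close>)
  have lin: "linear ((*v) S)" by simp
  have Sdg: "S *v dg j = (- g (\<theta> i) (\<theta> j) / (2 * \<epsilon>)) *\<^sub>R (\<theta> i - \<theta> j)" for j
    unfolding dg_def by (simp add: linear_neg[OF lin] linear_scale[OF lin] matrix_vector_mul_assoc SA)
  have SG: "S *v G = N (\<theta> i) *\<^sub>R (- (inverse (W (\<theta> i)))\<^sup>2 *\<^sub>R (\<Sum>j=1..M. c j *\<^sub>R (S *v dg j)))
      + inverse (W (\<theta> i)) *\<^sub>R (\<Sum>j=1..M. (c j * r j) *\<^sub>R (S *v dg j))"
    unfolding G_def by (simp only: linear_add[OF lin] linear_sum[OF lin] linear_scale[OF lin])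
  show "\<exists>G. (GDERIV (V_interp M \<theta> \<epsilon> (r_vec M \<theta> \<epsilon> \<Psi> Vt)) (\<theta> i) :> G) \<and>
           emp_cov M \<theta> *v G = (\<Sum>j=1..M. s_coef M \<theta> \<epsilon> (r_vec M \<theta> \<epsilon> \<Psi> Vt) i j *\<^sub>R \<theta> j)"
  proof (intro exI conjI)
    show "GDERIV (V_interp M \<theta> \<epsilon> (r_vec M \<theta> \<epsilon> \<Psi> Vt)) (\<theta> i) :> G" using GD unfolding r_def .
    show "emp_cov M \<theta> *v G = (\<Sum>j=1..M. s_coef M \<theta> \<epsilon> (r_vec M \<theta> \<epsilon> \<Psi> Vt) i j *\<^sub>R \<theta> j)"
    proof -
      define Wi where "Wi = W (\<theta> i)"
      define Ni where "Ni = N (\<theta> i)"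
      define p where "p = (\<lambda>j. c j * g (\<theta> i) (\<theta> j))"
      define D where "D = (\<Sum>j=1..M. p j *\<^sub>R (\<theta> j - \<theta> i))"
      define E where "E = (\<Sum>j=1..M. (p j * r j) *\<^sub>R (\<theta> j - \<theta> i))"
      have Wi0: "Wi \<noteq> 0" unfolding Wi_def using Wpos by (simp add: less_imp_neq[symmetric])
      have WiS: "Wi = (\<Sum>j=1..M. p j)" unfolding Wi_def W_def p_def ..
      have NiS: "Ni = (\<Sum>j=1..M. p j * r j)" unfolding Ni_def N_def p_def ..
      have e1: "c j *\<^sub>R (S *v dg j) = (1 / (2 * \<epsilon>)) *\<^sub>R (p j *\<^sub>R (\<theta> j - \<theta> i))" for j
        unfolding Sdg p_def by (simp add: algebra_simps)
      have e2: "(c j * r j) *\<^sub>R (S *v dg j) = (1 / (2 * \<epsilon>)) *\<^sub>R ((p j * r j) *\<^sub>R (\<theta> j - \<theta> i))" for j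
        unfolding Sdg p_def by (simp add: algebra_simps)
      have L: "S *v G = (1 / (2 * \<epsilon>)) *\<^sub>R ((1 / Wi) *\<^sub>R E - (Ni / Wi^2) *\<^sub>R D)"
      proof -
        have s1: "(\<Sum>j=1..M. c j *\<^sub>R (S *v dg j)) = (1 / (2 * \<epsilon>)) *\<^sub>R D"
          unfolding e1 D_def by (simp only: scaleR_sum_right)
        have s2: "(\<Sum>j=1..M. (c j * r j) *\<^sub>R (S *v dg j)) = (1 / (2 * \<epsilon>)) *\<^sub>R E"
          unfolding e2 E_def by (simp only: scaleR_sum_right)
        show ?thesis unfolding SG s1 s2 Wi_def[symmetric] Ni_def[symmetric] by (rule gen2)
      qed
      have sumT: "(\<Sum>k=1..M. markov_T M \<theta> \<epsilon> i k * r k) = Ni / Wi"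
        unfolding Tform NiS Wi_def[symmetric] p_def by (simp add: sum_divide_distrib)
      have R1: "(\<Sum>j=1..M. s_coef M \<theta> \<epsilon> r i j *\<^sub>R \<theta> j)
          = (\<Sum>j=1..M. ((1 / (2 * \<epsilon>)) * (p j / Wi) * (r j - Ni / Wi)) *\<^sub>R \<theta> j)"
        unfolding s_coef_def sumT unfolding Tform p_def Wi_def by simp
      have zero: "(\<Sum>j=1..M. ((1 / (2 * \<epsilon>)) * (p j / Wi) * (r j - Ni / Wi))) = 0"
      proof -
        have "(\<Sum>j=1..M. ((1 / (2 * \<epsilon>)) * (p j / Wi) * (r j - Ni / Wi)))
            = (1 / (2 * \<epsilon>)) * (1 / Wi) * ((\<Sum>j=1..M. p j * r j) - (Ni / Wi) * (\<Sum>j=1..M. p j))"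
        proof -
          have eqj: "((1 / (2 * \<epsilon>)) * (p j / Wi) * (r j - Ni / Wi))
              = (1 / (2 * \<epsilon>)) * (1 / Wi) * (p j * r j - (Ni / Wi) * p j)" for j
            using Wi0 by (simp add: field_simps)
          have "(\<Sum>j=1..M. ((1 / (2 * \<epsilon>)) * (p j / Wi) * (r j - Ni / Wi)))
              = (\<Sum>j=1..M. (1 / (2 * \<epsilon>)) * (1 / Wi) * (p j * r j - (Ni / Wi) * p j))"
            by (rule sum.cong[OF refl eqj])
          also have "\<dots> = (1 / (2 * \<epsilon>)) * (1 / Wi) * ((\<Sum>j=1..M. p j * r j) - (Ni / Wi) * (\<Sum>j=1..M. p j))"
            by (simp only: sum_distrib_left[symmetric] sum_subtractf)
          finally show ?thesis .
        qed
        also have "\<dots> = 0" unfolding NiS[symmetric] WiS[symmetric] using Wi0 by simp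
        finally show ?thesis .
      qed
      have R2: "(\<Sum>j=1..M. ((1 / (2 * \<epsilon>)) * (p j / Wi) * (r j - Ni / Wi)) *\<^sub>R \<theta> j)
          = (\<Sum>j=1..M. ((1 / (2 * \<epsilon>)) * (p j / Wi) * (r j - Ni / Wi)) *\<^sub>R (\<theta> j - \<theta> i))"
      proof -
        have "(\<Sum>j=1..M. ((1 / (2 * \<epsilon>)) * (p j / Wi) * (r j - Ni / Wi)) *\<^sub>R (\<theta> j - \<theta> i))
           = (\<Sum>j=1..M. ((1 / (2 * \<epsilon>)) * (p j / Wi) * (r j - Ni / Wi)) *\<^sub>R \<theta> j)
             - (\<Sum>j=1..M. ((1 / (2 * \<epsilon>)) * (p j / Wi) * (r j - Ni / Wi))) *\<^sub>R \<theta> i"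
          by (simp add: scaleR_diff_right sum_subtractf scaleR_sum_left)
        then show ?thesis unfolding zero scaleR_zero_left diff_zero by (rule sym)
      qed
      have R3: "(\<Sum>j=1..M. ((1 / (2 * \<epsilon>)) * (p j / Wi) * (r j - Ni / Wi)) *\<^sub>R (\<theta> j - \<theta> i))
          = (1 / (2 * \<epsilon>)) *\<^sub>R ((1 / Wi) *\<^sub>R E - (Ni / Wi^2) *\<^sub>R D)"
      proof -
        have eqj: "((1 / (2 * \<epsilon>)) * (p j / Wi) * (r j - Ni / Wi)) *\<^sub>R (\<theta> j - \<theta> i)
            = (1 / (2 * \<epsilon>)) *\<^sub>R ((1 / Wi) *\<^sub>R ((p j * r j) *\<^sub>R (\<theta> j - \<theta> i))
               - (Ni / Wi^2) *\<^sub>R (p j *\<^sub>R (\<theta> j - \<theta> i)))" for j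
        proof -
          have cf: "(1 / (2 * \<epsilon>)) * (p j / Wi) * (r j - Ni / Wi)
              = (1 / (2 * \<epsilon>)) * ((1 / Wi) * (p j * r j) - (Ni / Wi^2) * p j)"
            using Wi0 by (simp add: field_simps power2_eq_square)
          have gen: "\<And>a b k q u (v::real^'d). k *\<^sub>R (a *\<^sub>R (q *\<^sub>R v) - b *\<^sub>R (u *\<^sub>R v)) = (k * (a * q - b * u)) *\<^sub>R v"
            by (simp add: scaleR_diff_right algebra_simps)
          show ?thesis unfolding cf by (rule gen[symmetric])
        qed
        have "(\<Sum>j=1..M. ((1 / (2 * \<epsilon>)) * (p j / Wi) * (r j - Ni / Wi)) *\<^sub>R (\<theta> j - \<theta> i))
           = (\<Sum>j=1..M. (1 / (2 * \<epsilon>)) *\<^sub>R ((1 / Wi) *\<^sub>R ((p j * r j) *\<^sub>R (\<theta> j - \<theta> i))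
               - (Ni / Wi^2) *\<^sub>R (p j *\<^sub>R (\<theta> j - \<theta> i))))"
          by (rule sum.cong[OF refl eqj])
        also have "\<dots> = (1 / (2 * \<epsilon>)) *\<^sub>R ((1 / Wi) *\<^sub>R E - (Ni / Wi^2) *\<^sub>R D)"
          unfolding D_def E_def by (simp only: scaleR_sum_right[symmetric] sum_subtractf)
        finally show ?thesis .
      qed
      have "S *v G = (\<Sum>j=1..M. s_coef M \<theta> \<epsilon> r i j *\<^sub>R \<theta> j)"
        using L R1 R2 R3 by simp
      then show ?thesis unfolding S_def r_def .
    qed
  qed
qed

end
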